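(* Let $(G,\ell)$ be a complete edge-colored permutation graph, where $G=(V,E_1,\dots,E_k)$. Then $G$ does not contain a rainbow triangle, and for each $i\in\{1,\dots,k\}$ the monochromatic subgraph $G_{|i}$ together with $\ell$ is a simple permutation graph.
   Context: A complete $k$-edge-colored graph $G=(V,E_1,\dots,E_k)$ is the complete graph on a finite set $V$ with edges partitioned into $k$ nonempty color classes $E_i$; $G_{|i}=(V,E_i)$. A labeling is a bijection $\ell:V\to\{1,\dots,|V|\}$. A graph $(V,E)$ with labeling $\ell$ is a simple permutation graph of a permutation $\pi$ if for all $u,v$ with $\ell(u)>\ell(v)$: $\{u,v\}\in E$ iff $\pi^{-1}(\ell(u))<\pi^{-1}(\ell(v))$. $(G,\ell)$ is a complete edge-colored permutation graph if there exist permutations $\pi_1,\dots,\pi_k$ with $(G_{|i},\ell)$ a simple permutation graph of $\pi_i$ for all $i$. A rainbow triangle is a set of three vertices whose three edges have pairwise distinct colors. *)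

theory Defs
  imports "HOL-Combinatorics.Permutations"
begin

definition all_edges :: "'a set \<Rightarrow> 'a set set" where
  "all_edges V = {{u, v} | u v. u \<in> V \<and> v \<in> V \<and> u \<noteq> v}"

definition complete_k_edge_colored :: "'a set \<Rightarrow> nat \<Rightarrow> (nat \<Rightarrow> 'a set set) \<Rightarrow> bool" where
  "complete_k_edge_colored V k E \<longleftrightarrow>
     finite V \<and>
     (\<forall>i\<in>{1..k}. E i \<noteq> {}) \<and>
     (\<Union>i\<in>{1..k}. E i) = all_edges V \<and>
     (\<forall>i\<in>{1..k}. \<forall>j\<in>{1..k}. i \<noteq> j \<longrightarrow> E i \<inter> E j = {})"

definition labeling :: "'a set \<Rightarrow> ('a \<Rightarrow> nat) \<Rightarrow> bool" where
  "labeling V l \<longleftrightarrow> bij_betw l V {1..card V}"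

definition simple_perm_graph_of :: "'a set \<Rightarrow> 'a set set \<Rightarrow> ('a \<Rightarrow> nat) \<Rightarrow> (nat \<Rightarrow> nat) \<Rightarrow> bool" where
  "simple_perm_graph_of V E l \<pi> \<longleftrightarrow>
     \<pi> permutes {1..card V} \<and>
     (\<forall>u\<in>V. \<forall>v\<in>V. l u > l v \<longrightarrow>
        ({u, v} \<in> E \<longleftrightarrow> inv \<pi> (l u) < inv \<pi> (l v)))"

definition simple_perm_graph :: "'a set \<Rightarrow> 'a set set \<Rightarrow> ('a \<Rightarrow> nat) \<Rightarrow> bool" where
  "simple_perm_graph V E l \<longleftrightarrow> (\<exists>\<pi>. simple_perm_graph_of V E l \<pi>)"

definition complete_edge_colored_perm_graph ::
  "'a set \<Rightarrow> nat \<Rightarrow> (nat \<Rightarrow> 'a set set) \<Rightarrow> ('a \<Rightarrow> nat) \<Rightarrow> bool" where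
  "complete_edge_colored_perm_graph V k E l \<longleftrightarrow>
     complete_k_edge_colored V k E \<and> labeling V l \<and>
     (\<exists>\<pi>s. \<forall>i\<in>{1..k}. simple_perm_graph_of V (E i) l (\<pi>s i))"

definition rainbow_triangle :: "'a set \<Rightarrow> nat \<Rightarrow> (nat \<Rightarrow> 'a set set) \<Rightarrow> 'a set \<Rightarrow> bool" where
  "rainbow_triangle V k E T \<longleftrightarrow>
     (\<exists>x y z. T = {x, y, z} \<and> x \<in> V \<and> y \<in> V \<and> z \<in> V \<and>
        x \<noteq> y \<and> y \<noteq> z \<and> x \<noteq> z \<and>
        (\<exists>i\<in>{1..k}. \<exists>j\<in>{1..k}. \<exists>h\<in>{1..k}. i \<noteq> j \<and> j \<noteq> h \<and> i \<noteq> h \<and>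
           {x, y} \<in> E i \<and> {y, z} \<in> E j \<and> {x, z} \<in> E h))"

end

theory Submission
  imports Defs
begin

lemma key:
  assumes "simple_perm_graph_of V E l \<pi>" "a \<in> V" "b \<in> V" "c \<in> V"
    "l a < l b" "l b < l c" "{a, c} \<in> E"
  shows "{a, b} \<in> E \<or> {b, c} \<in> E"
proof (rule ccontr)
  assume n: "\<not> ({a, b} \<in> E \<or> {b, c} \<in> E)"
  have h: "\<forall>u\<in>V. \<forall>v\<in>V. l u > l v \<longrightarrow> ({u, v} \<in> E \<longleftrightarrow> inv \<pi> (l u) < inv \<pi> (l v))"
    using assms(1) unfolding simple_perm_graph_of_def by blast
  have "{b, a} \<notin> E" using n by (simp add: insert_commute)
  hence 1: "inv \<pi> (l a) \<le> inv \<pi> (l b)" using h assms by fastforce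
  have "{c, b} \<notin> E" using n by (simp add: insert_commute)
  hence 2: "inv \<pi> (l b) \<le> inv \<pi> (l c)" using h assms by fastforce
  have "{c, a} \<in> E" using assms(7) by (simp add: insert_commute)
  hence "inv \<pi> (l c) < inv \<pi> (l a)" using h assms by fastforce
  thus False using 1 2 by simp
qed

theorem proposition4p13:
  fixes V :: "'a set" and k :: nat and E :: "nat \<Rightarrow> 'a set set" and l :: "'a \<Rightarrow> nat"
  assumes "complete_edge_colored_perm_graph V k E l"
  shows "(\<nexists>T. rainbow_triangle V k E T) \<and> (\<forall>i\<in>{1..k}. simple_perm_graph V (E i) l)"
proof -
  obtain \<pi>s where pis: "\<forall>i\<in>{1..k}. simple_perm_graph_of V (E i) l (\<pi>s i)"
    using assms unfolding complete_edge_colored_perm_graph_def by blast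
  have disj: "\<And>p q e. p \<in> {1..k} \<Longrightarrow> q \<in> {1..k} \<Longrightarrow> p \<noteq> q \<Longrightarrow> e \<in> E p \<Longrightarrow> e \<notin> E q"
    using assms unfolding complete_edge_colored_perm_graph_def complete_k_edge_colored_def by blast
  have inj: "inj_on l V"
    using assms unfolding complete_edge_colored_perm_graph_def labeling_def bij_betw_def by blast
  have K: "\<And>a b c h. a \<in> V \<Longrightarrow> b \<in> V \<Longrightarrow> c \<in> V \<Longrightarrow> l a < l b \<Longrightarrow> l b < l c \<Longrightarrow> h \<in> {1..k}
     \<Longrightarrow> {a, c} \<in> E h \<Longrightarrow> {a, b} \<in> E h \<or> {b, c} \<in> E h"
    using key[OF pis[rule_format]] by blast
  have "\<not> rainbow_triangle V k E T" for T
  proof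
    assume "rainbow_triangle V k E T"
    then obtain x y z i j h where v: "x \<in> V" "y \<in> V" "z \<in> V" "x \<noteq> y" "y \<noteq> z" "x \<noteq> z"
      and c: "i \<in> {1..k}" "j \<in> {1..k}" "h \<in> {1..k}" "i \<noteq> j" "j \<noteq> h" "i \<noteq> h"
      and e: "{x, y} \<in> E i" "{y, z} \<in> E j" "{x, z} \<in> E h"
      unfolding rainbow_triangle_def by blast
    have d: "l x \<noteq> l y" "l y \<noteq> l z" "l x \<noteq> l z" using inj v by (auto dest: inj_onD)
    have e': "{y, x} \<in> E i" "{z, y} \<in> E j" "{z, x} \<in> E h" using e by (auto simp: insert_commute)
    have n: "{x,y} \<notin> E j" "{x,y} \<notin> E h" "{y,z} \<notin> E i" "{y,z} \<notin> E h"
      "{x,z} \<notin> E i" "{x,z} \<notin> E j"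
      using disj[OF c(1) c(2) c(4) e(1)] disj[OF c(1) c(3) c(6) e(1)]
        disj[OF c(2) c(1) c(4)[symmetric] e(2)] disj[OF c(2) c(3) c(5) e(2)]
        disj[OF c(3) c(1) c(6)[symmetric] e(3)] disj[OF c(3) c(2) c(5)[symmetric] e(3)] by auto
    have n': "{y,x} \<notin> E j" "{y,x} \<notin> E h" "{z,y} \<notin> E i" "{z,y} \<notin> E h"
      "{z,x} \<notin> E i" "{z,x} \<notin> E j" using n by (auto simp: insert_commute)
    consider "l x < l y" "l y < l z" | "l x < l z" "l z < l y" | "l y < l x" "l x < l z"
      | "l y < l z" "l z < l x" | "l z < l x" "l x < l y" | "l z < l y" "l y < l x"
      using d by linarith
    then show False
    proof cases
      case 1 then show ?thesis using K[OF v(1) v(2) v(3) 1 c(3) e(3)] n n' by blast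
    next
      case 2 then show ?thesis using K[OF v(1) v(3) v(2) 2 c(1) e(1)] n n' by blast
    next
      case 3 then show ?thesis using K[OF v(2) v(1) v(3) 3 c(2) e(2)] n n' by blast
    next
      case 4 then show ?thesis using K[OF v(2) v(3) v(1) 4 c(1) e'(1)] n n' by blast
    next
      case 5 then show ?thesis using K[OF v(3) v(1) v(2) 5 c(2) e'(2)] n n' by blast
    next
      case 6 then show ?thesis using K[OF v(3) v(2) v(1) 6 c(3) e'(3)] n n' by blast
    qed
  qed
  moreover have "\<forall>i\<in>{1..k}. simple_perm_graph V (E i) l"
    using pis unfolding simple_perm_graph_def by blast
  ultimately show ?thesis by blast
qed

end
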